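(* Let $G$ be a finite simple graph containing no induced banner and no induced odd hole. Then at least one of the following holds: (i) $G$ is perfect; (ii) $\alpha(G) \leq 2$; (iii) every odd antihole $A$ of $G$ is contained in a homogeneous set $H$ of $G$ such that $G[H]$ contains no co-triangle.
   Context: A hole is a chordless (induced) cycle with at least four vertices; it is odd if it has an odd number of vertices. An antihole is the complement of a hole; an odd antihole is the complement of an odd hole. A banner is the graph consisting of a hole on four vertices together with one additional vertex adjacent to exactly one vertex of that hole. A graph $G$ is perfect if $\chi(F) = \omega(F)$ for every induced subgraph $F$ of $G$, where $\chi$ is the chromatic number and $\omega$ the clique number. $\alpha(G)$ is the maximum size of a stable set. A co-triangle is a set of three pairwise non-adjacent vertices. A set $H \subseteq V(G)$ is homogeneous if $2 \leq |H| < |V(G)|$ and every vertex of $V(G)\setminus H$ is adjacent either to all of $H$ or to none of $H$; $G[H]$ is the induced subgraph on $H$. *)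

theory Defs
  imports Main
begin

definition simple_graph :: "'a set \<Rightarrow> ('a \<Rightarrow> 'a \<Rightarrow> bool) \<Rightarrow> bool" where
  "simple_graph V E \<longleftrightarrow> finite V \<and> (\<forall>x y. E x y \<longrightarrow> x \<in> V \<and> y \<in> V)
     \<and> (\<forall>x y. E x y \<longrightarrow> E y x) \<and> (\<forall>x. \<not> E x x)"

definition is_hole :: "'a set \<Rightarrow> ('a \<Rightarrow> 'a \<Rightarrow> bool) \<Rightarrow> 'a set \<Rightarrow> bool" where
  "is_hole V E S \<longleftrightarrow> S \<subseteq> V \<and> (\<exists>f k. k \<ge> 4 \<and> bij_betw f {..<k} S \<and>
     (\<forall>i<k. \<forall>j<k. E (f i) (f j) \<longleftrightarrow> (j = Suc i mod k \<or> i = Suc j mod k)))"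

definition is_antihole :: "'a set \<Rightarrow> ('a \<Rightarrow> 'a \<Rightarrow> bool) \<Rightarrow> 'a set \<Rightarrow> bool" where
  "is_antihole V E S \<longleftrightarrow> S \<subseteq> V \<and> (\<exists>f k. k \<ge> 4 \<and> bij_betw f {..<k} S \<and>
     (\<forall>i<k. \<forall>j<k. i \<noteq> j \<longrightarrow> (\<not> E (f i) (f j) \<longleftrightarrow> (j = Suc i mod k \<or> i = Suc j mod k))))"

definition is_odd_hole :: "'a set \<Rightarrow> ('a \<Rightarrow> 'a \<Rightarrow> bool) \<Rightarrow> 'a set \<Rightarrow> bool" where
  "is_odd_hole V E S \<longleftrightarrow> is_hole V E S \<and> odd (card S)"

definition is_odd_antihole :: "'a set \<Rightarrow> ('a \<Rightarrow> 'a \<Rightarrow> bool) \<Rightarrow> 'a set \<Rightarrow> bool" where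
  "is_odd_antihole V E S \<longleftrightarrow> is_antihole V E S \<and> odd (card S)"

definition has_induced_banner :: "'a set \<Rightarrow> ('a \<Rightarrow> 'a \<Rightarrow> bool) \<Rightarrow> bool" where
  "has_induced_banner V E \<longleftrightarrow> (\<exists>a\<in>V. \<exists>b\<in>V. \<exists>c\<in>V. \<exists>d\<in>V. \<exists>e\<in>V.
     distinct [a, b, c, d, e] \<and>
     E a b \<and> E b c \<and> E c d \<and> E d a \<and> \<not> E a c \<and> \<not> E b d \<and>
     E e a \<and> \<not> E e b \<and> \<not> E e c \<and> \<not> E e d)"

definition is_clique :: "('a \<Rightarrow> 'a \<Rightarrow> bool) \<Rightarrow> 'a set \<Rightarrow> bool" where
  "is_clique E K \<longleftrightarrow> (\<forall>x\<in>K. \<forall>y\<in>K. x \<noteq> y \<longrightarrow> E x y)"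

definition is_stable :: "('a \<Rightarrow> 'a \<Rightarrow> bool) \<Rightarrow> 'a set \<Rightarrow> bool" where
  "is_stable E S \<longleftrightarrow> (\<forall>x\<in>S. \<forall>y\<in>S. \<not> E x y)"

definition clique_number :: "'a set \<Rightarrow> ('a \<Rightarrow> 'a \<Rightarrow> bool) \<Rightarrow> nat" where
  "clique_number U E = Max {card K | K. K \<subseteq> U \<and> is_clique E K}"

definition stability_number :: "'a set \<Rightarrow> ('a \<Rightarrow> 'a \<Rightarrow> bool) \<Rightarrow> nat" where
  "stability_number U E = Max {card S | S. S \<subseteq> U \<and> is_stable E S}"

definition chromatic_number :: "'a set \<Rightarrow> ('a \<Rightarrow> 'a \<Rightarrow> bool) \<Rightarrow> nat" where
  "chromatic_number U E = (LEAST k. \<exists>c :: 'a \<Rightarrow> nat.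
     (\<forall>v\<in>U. c v < k) \<and> (\<forall>x\<in>U. \<forall>y\<in>U. E x y \<longrightarrow> c x \<noteq> c y))"

definition perfect :: "'a set \<Rightarrow> ('a \<Rightarrow> 'a \<Rightarrow> bool) \<Rightarrow> bool" where
  "perfect V E \<longleftrightarrow> (\<forall>U \<subseteq> V. chromatic_number U E = clique_number U E)"

definition homogeneous :: "'a set \<Rightarrow> ('a \<Rightarrow> 'a \<Rightarrow> bool) \<Rightarrow> 'a set \<Rightarrow> bool" where
  "homogeneous V E H \<longleftrightarrow> H \<subseteq> V \<and> 2 \<le> card H \<and> card H < card V \<and>
     (\<forall>v \<in> V - H. (\<forall>h\<in>H. E v h) \<or> (\<forall>h\<in>H. \<not> E v h))"

definition has_cotriangle :: "('a \<Rightarrow> 'a \<Rightarrow> bool) \<Rightarrow> 'a set \<Rightarrow> bool" where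
  "has_cotriangle E S \<longleftrightarrow> (\<exists>x\<in>S. \<exists>y\<in>S. \<exists>z\<in>S. distinct [x, y, z] \<and>
     \<not> E x y \<and> \<not> E y z \<and> \<not> E x z)"

end

theory Submission
  imports Defs
begin

lemma banner_False:
  assumes "\<not> has_induced_banner V E" "a \<in> V" "b \<in> V" "c \<in> V" "d \<in> V" "e \<in> V"
    "distinct [a, b, c, d, e]" "E a b" "E b c" "E c d" "E d a" "\<not> E a c" "\<not> E b d"
    "E e a" "\<not> E e b" "\<not> E e c" "\<not> E e d"
  shows False
  using assms unfolding has_induced_banner_def by blast

lemma c5_False:
  assumes sg: "simple_graph V E" and nh: "\<not> (\<exists>S. is_odd_hole V E S)"
    and V: "v0 \<in> V" "v1 \<in> V" "v2 \<in> V" "v3 \<in> V" "v4 \<in> V"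
    and d: "distinct [v0, v1, v2, v3, v4]"
    and e: "E v0 v1" "E v1 v2" "E v2 v3" "E v3 v4" "E v4 v0"
    and n: "\<not> E v0 v2" "\<not> E v0 v3" "\<not> E v1 v3" "\<not> E v1 v4" "\<not> E v2 v4"
  shows False
proof -
  have sym: "\<And>x y. E x y \<Longrightarrow> E y x" and irr: "\<And>x. \<not> E x x"
    using sg unfolding simple_graph_def by blast+
  let ?l = "[v0, v1, v2, v3, v4]"
  have bij: "bij_betw ((!) ?l) {..<5} (set ?l)"
    by (rule bij_betw_nth) (use d in auto)
  have n': "\<not> E v2 v0" "\<not> E v3 v0" "\<not> E v3 v1" "\<not> E v4 v1" "\<not> E v4 v2"
    using n sym by blast+
  have e': "E v1 v0" "E v2 v1" "E v3 v2" "E v4 v3" "E v0 v4"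
    using e sym by blast+
  have cond: "\<forall>i<5. \<forall>j<5. E (?l ! i) (?l ! j) \<longleftrightarrow> (j = Suc i mod 5 \<or> i = Suc j mod 5)"
  proof (intro allI impI)
    fix i j :: nat assume "i < 5" "j < 5"
    hence "i = 0 \<or> i = 1 \<or> i = 2 \<or> i = 3 \<or> i = 4" "j = 0 \<or> j = 1 \<or> j = 2 \<or> j = 3 \<or> j = 4" by arith+
    thus "E (?l ! i) (?l ! j) \<longleftrightarrow> (j = Suc i mod 5 \<or> i = Suc j mod 5)"
      by (elim disjE) (simp_all add: e e' n n' irr)
  qed
  have sub: "set ?l \<subseteq> V" using V by simp
  have "is_hole V E (set ?l)"
    unfolding is_hole_def
    apply (rule conjI[OF sub])
    apply (rule exI[of _ "(!) ?l"], rule exI[of _ 5])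
    using bij cond by simp
  moreover have "card (set ?l) = 5" using distinct_card[OF d] by simp
  ultimately have "is_odd_hole V E (set ?l)"
    unfolding is_odd_hole_def by simp
  thus False using nh by blast
qed

locale AH =
  fixes V :: "'a set" and E :: "'a \<Rightarrow> 'a \<Rightarrow> bool" and A :: "'a set" and k :: nat and f :: "nat \<Rightarrow> 'a"
  assumes sg: "simple_graph V E" and nob: "\<not> has_induced_banner V E"
    and nohole: "\<not> (\<exists>S. is_odd_hole V E S)"
    and AV: "A \<subseteq> V" and k7: "7 \<le> k" and kodd: "odd k" and bij: "bij_betw f {..<k} A"
    and adjf: "\<forall>i<k. \<forall>j<k. i \<noteq> j \<longrightarrow> (\<not> E (f i) (f j) \<longleftrightarrow> (j = Suc i mod k \<or> i = Suc j mod k))"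
begin

lemma sym: "E x y \<Longrightarrow> E y x" using sg unfolding simple_graph_def by blast
lemma irr[simp]: "\<not> E x x" using sg unfolding simple_graph_def by blast
lemma EV1: "E x y \<Longrightarrow> x \<in> V" using sg unfolding simple_graph_def by blast
lemma finV: "finite V" using sg unfolding simple_graph_def by blast

definition a :: "int \<Rightarrow> 'a" where "a i = f (nat (i mod int k))"

lemma kpos: "0 < int k" using k7 by simp

lemma idx_lt: "nat (i mod int k) < k"
  using kpos by (simp add: nat_less_iff)

lemma a_in[simp]: "a i \<in> A"
  unfolding a_def using bij_betw_apply[OF bij] idx_lt by simp

lemma a_V[simp]: "a i \<in> V" using a_in AV by blast

lemma injf: "inj_on f {..<k}" using bij bij_betw_def by blast

lemma a_eq_iff: "a i = a j \<longleftrightarrow> int k dvd (i - j)"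
proof -
  have "a i = a j \<longleftrightarrow> nat (i mod int k) = nat (j mod int k)"
    unfolding a_def using inj_onD[OF injf] idx_lt by auto
  also have "\<dots> \<longleftrightarrow> i mod int k = j mod int k"
    using kpos by (simp add: nat_eq_iff)
  also have "\<dots> \<longleftrightarrow> int k dvd (i - j)" by (simp add: mod_eq_dvd_iff)
  finally show ?thesis .
qed

lemma a_surj: "w \<in> A \<Longrightarrow> \<exists>i. w = a i"
proof -
  assume "w \<in> A"
  then obtain m where m: "m < k" "w = f m" using bij unfolding bij_betw_def by auto
  have "a (int m) = f m" unfolding a_def using m by simp
  thus ?thesis using m by metis
qed

lemma a_nonadj: "a i \<noteq> a j \<Longrightarrow> (\<not> E (a i) (a j) \<longleftrightarrow> (a j = a (i+1) \<or> a i = a (j+1)))"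
proof -
  assume ne: "a i \<noteq> a j"
  define p where "p = nat (i mod int k)"
  define q where "q = nat (j mod int k)"
  have pk: "p < k" "q < k" unfolding p_def q_def using idx_lt by auto
  have pq: "p \<noteq> q" using ne unfolding a_def p_def q_def by auto
  have s1: "nat ((i+1) mod int k) = Suc p mod k"
  proof -
    have "int (Suc p mod k) = (int p + 1) mod int k" by (simp add: zmod_int add.commute)
    also have "\<dots> = (i mod int k + 1) mod int k" unfolding p_def using kpos by simp
    also have "\<dots> = (i + 1) mod int k" by (simp add: mod_add_left_eq)
    finally show ?thesis by (metis nat_int)
  qed
  have s2: "nat ((j+1) mod int k) = Suc q mod k"
  proof -
    have "int (Suc q mod k) = (int q + 1) mod int k" by (simp add: zmod_int add.commute)
    also have "\<dots> = (j mod int k + 1) mod int k" unfolding q_def using kpos by simp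
    also have "\<dots> = (j + 1) mod int k" by (simp add: mod_add_left_eq)
    finally show ?thesis by (metis nat_int)
  qed
  have sk: "Suc p mod k < k" "Suc q mod k < k" using kpos by auto
  have "a j = a (i+1) \<longleftrightarrow> q = Suc p mod k"
    unfolding a_def q_def[symmetric] s1 using inj_onD[OF injf] pk sk by auto
  moreover have "a i = a (j+1) \<longleftrightarrow> p = Suc q mod k"
    unfolding a_def p_def[symmetric] s2 using inj_onD[OF injf] pk sk by auto
  moreover have "E (a i) (a j) = E (f p) (f q)" unfolding a_def p_def q_def by simp
  ultimately show ?thesis using adjf pk pq by auto
qed

lemma ndvd_pos: "0 < x \<Longrightarrow> x < int k \<Longrightarrow> \<not> int k dvd x"
  using zdvd_imp_le by fastforce

lemma ndvd_num[simp]: "numeral w \<le> (6::int) \<Longrightarrow> \<not> int k dvd numeral w"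
proof (rule ndvd_pos)
  assume "numeral w \<le> (6::int)"
  moreover have "(7::int) \<le> int k" using k7 by simp
  ultimately show "numeral w < int k" by linarith
qed simp
lemma ndvd_negnum[simp]: "numeral w \<le> (6::int) \<Longrightarrow> \<not> int k dvd - numeral w"
  using ndvd_num by simp
lemma ndvd_one[simp]: "\<not> int k dvd 1" "\<not> int k dvd -1"
  using ndvd_pos[of 1] k7 by auto

lemma kne1[simp]: "k \<noteq> Suc 0" "k \<noteq> 1" using k7 by auto

lemma E_aa: "E (a x) (a y) \<longleftrightarrow> \<not> int k dvd (x - y) \<and> \<not> int k dvd (y - x - 1) \<and> \<not> int k dvd (x - y - 1)"
proof (cases "a x = a y")
  case True
  from True have d: "int k dvd (x - y)" using a_eq_iff by blast
  from True have "\<not> E (a x) (a y)" by simp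
  with d show ?thesis by simp
next
  case False
  thus ?thesis using a_nonadj[OF False] by (auto simp add: a_eq_iff algebra_simps)
qed

lemmas aa_simps = E_aa a_eq_iff

lemma out_ne[simp]: "x \<notin> A \<Longrightarrow> a i \<noteq> x" "x \<notin> A \<Longrightarrow> x \<noteq> a i"
  using a_in by blast+

lemma Ea_sym[simp]: "x \<notin> A \<Longrightarrow> E (a i) x \<longleftrightarrow> E x (a i)"
  using sym by blast

lemma test: "E (a (j+2)) (a j) \<and> \<not> E (a (j+2)) (a (j+3)) \<and> E (a j) (a (j+5)) \<and> a (j+1) \<noteq> a (j+4)
   \<and> E (a (j + 1 + 2)) (a (j+1))"
  by (simp add: aa_simps)

end

context AH begin

definition hn :: "'a \<Rightarrow> bool" where "hn x \<longleftrightarrow> (\<exists>i. E x (a i))"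

lemma iter_step: "P i \<Longrightarrow> (\<And>j. P j \<Longrightarrow> P (j + c)) \<Longrightarrow> P (i + c * int m)"
proof (induction m)
  case 0 thus ?case by simp
next
  case (Suc m)
  have "P (i + c * int m + c)" using Suc by blast
  thus ?case by (simp add: algebra_simps)
qed

lemma reach1:
  assumes "P i" "\<And>j. P j \<Longrightarrow> P (j+1)"
  shows "\<exists>j. a j = a l \<and> P j"
proof -
  define m where "m = nat ((l - i) mod int k)"
  have m: "int m = (l - i) mod int k" unfolding m_def using kpos by simp
  have "P (i + 1 * int m)" by (rule iter_step[where c=1]) (use assms in auto)
  moreover have "a (i + int m) = a l"
    unfolding a_eq_iff m by (simp add: mod_eq_dvd_iff[symmetric] mod_add_right_eq)
  ultimately show ?thesis by auto
qed

lemma reach2: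
  assumes "P i" "\<And>j. P j \<Longrightarrow> P (j+2)"
  shows "\<exists>j. a j = a l \<and> P j"
proof -
  define Q where "Q j \<longleftrightarrow> (\<exists>j'. a j' = a j \<and> P j')" for j
  have "Q i" unfolding Q_def using assms(1) by blast
  moreover have "Q (j+1)" if qj: "Q j" for j
  proof -
    obtain j' where j': "a j' = a j" "P j'" using qj unfolding Q_def by blast
    define h where "h = nat ((int k + 1) div 2)"
    have h: "2 * int h = int k + 1" unfolding h_def using kodd kpos
      by (simp add: odd_iff_mod_2_eq_one) presburger
    have "P (j' + 2 * int h)" by (rule iter_step[where c=2]) (use assms j' in auto)
    moreover have "a (j' + 2 * int h) = a (j+1)"
    proof -
      have d: "int k dvd (j' - j)" using j'(1) a_eq_iff by blast
      have "j' + (int k + 1) - (j + 1) = (j' - j) + int k" by simp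
      moreover have "int k dvd ((j' - j) + int k)" using d by (intro dvd_add) simp_all
      ultimately have "int k dvd (j' + (int k + 1) - (j + 1))" by metis
      thus ?thesis unfolding h a_eq_iff .
    qed
    ultimately show ?thesis unfolding Q_def by blast
  qed
  ultimately obtain j where "a j = a l" "Q j" using reach1[of Q i] by blast
  thus ?thesis unfolding Q_def by metis
qed

lemma F1step:
  assumes x: "x \<in> V" "x \<notin> A" and n0: "\<not> E x (a j)" and n1: "\<not> E x (a (j+1))"
  shows "\<not> E x (a (j+2))"
proof
  assume e2: "E x (a (j+2))"
  show False
  proof (cases "E x (a (j+3))")
    case True
    show False
      by (rule banner_False[OF nob, of "a (j+3)" x "a (j+2)" "a j" "a (j+1)"])
        (use x n0 n1 e2 True in \<open>simp_all add: aa_simps\<close>)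
  next
    case n3: False
    show False
    proof (cases "E x (a (j+4))")
      case True
      show False
        by (rule banner_False[OF nob, of "a (j+4)" "a j" "a (j+3)" "a (j+1)" x])
          (use x n0 n1 e2 n3 True in \<open>simp_all add: aa_simps\<close>)
    next
      case n4: False
      show False
      proof (cases "E x (a (j+5))")
        case True
        show False
          by (rule banner_False[OF nob, of "a (j+5)" "a j" "a (j+4)" "a (j+1)" x])
            (use x n0 n1 e2 n3 n4 True in \<open>simp_all add: aa_simps\<close>)
      next
        case n5: False
        show False
          by (rule banner_False[OF nob, of "a (j+2)" "a (j+4)" "a (j+1)" "a (j+5)" x])
            (use x n0 n1 e2 n3 n4 n5 in \<open>simp_all add: aa_simps\<close>)
      qed
    qed
  qed
qed

lemma F1:
  assumes x: "x \<in> V" "x \<notin> A" "hn x" and n0: "\<not> E x (a j)"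
  shows "E x (a (j+1))"
proof (rule ccontr)
  assume n1: "\<not> E x (a (j+1))"
  define P where "P i \<longleftrightarrow> \<not> E x (a i) \<and> \<not> E x (a (i+1))" for i
  have "P j" unfolding P_def using n0 n1 by simp
  moreover have "P (i+1)" if "P i" for i
    using F1step[OF x(1,2), of i] that unfolding P_def by (simp add: add.assoc)
  moreover obtain l where l: "E x (a l)" using x(3) unfolding hn_def by blast
  ultimately obtain i where "a i = a l" "P i" using reach1[of P j l] by blast
  thus False using l unfolding P_def by simp
qed

lemma F1':
  assumes x: "x \<in> V" "x \<notin> A" "hn x" and n0: "\<not> E x (a j)"
  shows "E x (a (j - 1))"
proof (rule ccontr)
  assume "\<not> E x (a (j - 1))"
  from F1[OF x this] show False using n0 by simp
qed

lemma F5: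
  assumes x: "x \<in> V" "x \<notin> A" "hn x" and n0: "\<not> E x (a j)" and n3: "\<not> E x (a (j+3))"
  shows False
proof -
  have e1: "E x (a (j+1))" using F1[OF x n0] .
  have e2: "E x (a (j+2))" using F1'[OF x n3] by (simp add: add.commute)
  show False
    by (rule c5_False[OF sg nohole, of x "a (j+1)" "a (j+3)" "a j" "a (j+2)"])
      (use x n0 n3 e1 e2 in \<open>simp_all add: aa_simps\<close>)
qed

end

context AH begin

lemma E1:
  assumes x: "x \<in> V" "x \<notin> A" "hn x"
  shows "\<exists>p. E x (a p) \<and> E x (a (p+1))"
proof (rule ccontr)
  assume no: "\<not> (\<exists>p. E x (a p) \<and> E x (a (p+1)))"
  then obtain q where q: "\<not> E x (a q)" by blast
  define P where "P i \<longleftrightarrow> \<not> E x (a i)" for i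
  have "P (i+2)" if "P i" for i
  proof -
    have "E x (a (i+1))" using F1[OF x] that unfolding P_def by blast
    thus ?thesis using no unfolding P_def by (metis add.assoc one_add_one)
  qed
  moreover obtain l where l: "E x (a l)" using x(3) unfolding hn_def by blast
  ultimately obtain i where "a i = a l" "P i" using reach2[of P q l] q unfolding P_def by blast
  thus False using l unfolding P_def by simp
qed

lemma Zlem:
  assumes z: "z \<in> V" "z \<notin> A" "\<And>i. \<not> E z (a i)"
    and x: "x \<in> V" "x \<notin> A" "hn x" and q: "\<not> E x (a q)" and zx: "E z x"
  shows False
proof -
  define P where "P i \<longleftrightarrow> \<not> E x (a i)" for i
  have "P (i+2)" if pi: "P i" for i
  proof (rule ccontr)
    assume e2: "\<not> P (i+2)"
    have e3: "E x (a (i+3))" using F5[OF x, of i] pi unfolding P_def by blast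
    have zx': "z \<noteq> x" using zx by auto
    show False
      by (rule banner_False[OF nob, of x "a (i+2)" "a i" "a (i+3)" z])
        (use x z pi e2 e3 zx zx' in \<open>simp_all add: aa_simps P_def\<close>)
  qed
  moreover obtain l where l: "E x (a l)" using x(3) unfolding hn_def by blast
  ultimately obtain i where "a i = a l" "P i" using reach2[of P q l] q unfolding P_def by blast
  thus False using l unfolding P_def by simp
qed

lemma alpha_step:
  assumes x: "x \<in> V" "x \<notin> A" "hn x" and y: "y \<in> V" "y \<notin> A" "hn y"
    and xy: "x \<noteq> y" "\<not> E x y" "\<not> E y x"
    and n0: "\<not> E x (a i)" "\<not> E y (a i)" and nx2: "\<not> E x (a (i+2))" and ey2: "E y (a (i+2))"
  shows False
proof -
  have ex1: "E x (a (i+1))" using F1[OF x n0(1)] .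
  have ey1: "E y (a (i+1))" using F1[OF y n0(2)] .
  have ex3: "E x (a (i+3))" using F1[OF x nx2] by (simp add: add.assoc)
  show False
  proof (cases "E y (a (i+3))")
    case True
    show False
      by (rule banner_False[OF nob, of "a (i+3)" "a i" "a (i+2)" y x])
        (use x y xy n0 nx2 ey2 ex3 True in \<open>simp_all add: aa_simps\<close>)
  next
    case False
    show False using F5[OF y n0(2) False] .
  qed
qed

lemma alpha:
  assumes x: "x \<in> V" "x \<notin> A" "hn x" and y: "y \<in> V" "y \<notin> A" "hn y"
    and xy: "x \<noteq> y" "\<not> E x y"
    and n0: "\<not> E x (a j)" "\<not> E y (a j)"
  shows False
proof -
  have yx: "\<not> E y x" using xy sym by blast
  define P where "P i \<longleftrightarrow> \<not> E x (a i) \<and> \<not> E y (a i)" for i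
  have "P (i+2)" if pi: "P i" for i
  proof -
    have ex1: "E x (a (i+1))" using F1[OF x] pi unfolding P_def by blast
    have ey1: "E y (a (i+1))" using F1[OF y] pi unfolding P_def by blast
    have c1: "\<not> (E x (a (i+2)) \<and> E y (a (i+2)))"
    proof
      assume h: "E x (a (i+2)) \<and> E y (a (i+2))"
      show False
        by (rule banner_False[OF nob, of "a (i+2)" x "a (i+1)" y "a i"])
          (use x y xy yx pi ex1 ey1 h in \<open>simp_all add: aa_simps P_def\<close>)
    qed
    have c2: "\<not> (\<not> E x (a (i+2)) \<and> E y (a (i+2)))"
      using alpha_step[OF x y xy yx, of i] pi unfolding P_def by blast
    have c3: "\<not> (E x (a (i+2)) \<and> \<not> E y (a (i+2)))"
      using alpha_step[OF y x xy(1)[symmetric] yx xy(2), of i] pi unfolding P_def by blast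
    show ?thesis using c1 c2 c3 unfolding P_def by blast
  qed
  moreover obtain l where l: "E x (a l)" using x(3) unfolding hn_def by blast
  ultimately obtain i where "a i = a l" "P i" using reach2[of P j l] n0 unfolding P_def by blast
  thus False using l unfolding P_def by simp
qed

lemma beta_step:
  assumes x: "x \<in> V" "x \<notin> A" "hn x" and y: "y \<in> V" "y \<notin> A" "hn y"
    and w: "w \<in> V" "w \<notin> A" "hn w"
    and d: "x \<noteq> y" "x \<noteq> w" "y \<noteq> w"
    and ne: "\<not> E x y" "\<not> E y x" "\<not> E x w" "\<not> E w x" "\<not> E y w" "\<not> E w y"
    and n0: "\<not> E x (a i)" and ny1: "\<not> E y (a (i+1))" and ex2: "E x (a (i+2))"
  shows False
proof -
  have ey0: "E y (a i)" using alpha[OF x y d(1) ne(1)] n0 by blast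
  have ew0: "E w (a i)" using alpha[OF x w d(2) ne(3)] n0 by blast
  have ex1: "E x (a (i+1))" using F1[OF x n0] .
  have ew1: "E w (a (i+1))" using alpha[OF y w d(3) ne(5)] ny1 by blast
  have ey2: "E y (a (i+2))" using F1[OF y ny1] by (simp add: add.assoc)
  show False
  proof (cases "E w (a (i+2))")
    case True
    show False
      by (rule banner_False[OF nob, of "a (i+2)" x "a (i+1)" w y])
        (use x y w d ne n0 ny1 ex2 ey0 ew0 ex1 ew1 ey2 True in \<open>simp_all add: aa_simps\<close>)
  next
    case False
    show False
      by (rule c5_False[OF sg nohole, of w "a (i+1)" x "a (i+2)" "a i"])
        (use x y w d ne n0 ny1 ex2 ey0 ew0 ex1 ew1 ey2 False in \<open>simp_all add: aa_simps\<close>)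
  qed
qed


lemma beta:
  assumes x: "x \<in> V" "x \<notin> A" "hn x" and y: "y \<in> V" "y \<notin> A" "hn y"
    and w: "w \<in> V" "w \<notin> A" "hn w"
    and d: "x \<noteq> y" "x \<noteq> w" "y \<noteq> w"
    and ne: "\<not> E x y" "\<not> E x w" "\<not> E y w"
    and n0: "\<not> E x (a j)"
  shows False
proof -
  have ne': "\<not> E y x" "\<not> E w x" "\<not> E w y" using ne sym by blast+
  define P where "P i \<longleftrightarrow> \<not> E x (a i)" for i
  have "P (i+2)" if pi: "P i" for i
  proof (rule ccontr)
    assume ex2: "\<not> P (i+2)"
    have ey0: "E y (a i)" using alpha[OF x y d(1) ne(1)] pi unfolding P_def by blast
    have ew0: "E w (a i)" using alpha[OF x w d(2) ne(2)] pi unfolding P_def by blast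
    have ex1: "E x (a (i+1))" using F1[OF x] pi unfolding P_def by blast
    show False
    proof (cases "E y (a (i+1)) \<and> E w (a (i+1))")
      case True
      show False
        by (rule banner_False[OF nob, of "a (i+1)" y "a i" w x])
          (use x y w d ne ne' pi ey0 ew0 ex1 True in \<open>simp_all add: aa_simps P_def\<close>)
    next
      case False
      then consider "\<not> E y (a (i+1))" | "\<not> E w (a (i+1))" by blast
      thus False
      proof cases
        case 1
        show False using beta_step[OF x y w d ne(1) ne'(1) ne(2) ne'(2) ne(3) ne'(3), of i] pi ex2 1
          unfolding P_def by blast
      next
        case 2
        show False using beta_step[OF x w y d(2) d(1) d(3)[symmetric] ne(2) ne'(2) ne(1) ne'(1) ne'(3) ne(3), of i] pi ex2 2
          unfolding P_def by blast
      qed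
    qed
  qed
  moreover obtain l where l: "E x (a l)" using x(3) unfolding hn_def by blast
  ultimately obtain i where "a i = a l" "P i" using reach2[of P j l] n0 unfolding P_def by blast
  thus False using l unfolding P_def by simp
qed

end

fun lev :: "'a set \<Rightarrow> ('a \<Rightarrow> 'a \<Rightarrow> bool) \<Rightarrow> 'a set \<Rightarrow> nat \<Rightarrow> 'a set" where
  "lev V E A 0 = A"
| "lev V E A (Suc m) = lev V E A m \<union>
     {x \<in> V. (x \<in> A \<or> (\<exists>w\<in>A. E x w)) \<and> (\<exists>y \<in> lev V E A m. x \<noteq> y \<and> \<not> E x y)}"

context AH begin

abbreviation L where "L m \<equiv> lev V E A m"
definition H where "H = (\<Union>m. L m)"

lemma hn_iff: "hn x \<longleftrightarrow> (\<exists>w\<in>A. E x w)"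
  unfolding hn_def using a_surj a_in by blast

lemma L_mono1: "L m \<subseteq> L (Suc m)" by auto

lemma L_mono: "m \<le> m' \<Longrightarrow> L m \<subseteq> L m'"
  by (induction m' rule: dec_induct) (use L_mono1 in blast)+

lemma A_L: "A \<subseteq> L m" using L_mono[of 0 m] by simp

lemma L_V: "L m \<subseteq> V"
  by (induction m) (use AV in auto)

lemma L_ok: "x \<in> L m \<Longrightarrow> x \<in> A \<or> hn x"
  by (induction m) (auto simp: hn_iff)

lemma L_add: "s \<in> V \<Longrightarrow> s \<in> A \<or> hn s \<Longrightarrow> y \<in> L n \<Longrightarrow> s \<noteq> y \<Longrightarrow> \<not> E s y \<Longrightarrow> s \<in> L (Suc n)"
  by (auto simp: hn_iff)

lemma L_back: "x \<in> L (Suc n) \<Longrightarrow> x \<notin> A \<Longrightarrow> \<exists>y \<in> L n. x \<noteq> y \<and> \<not> E x y"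
proof (induction n arbitrary: x)
  case 0 thus ?case by auto
next
  case (Suc n)
  show ?case
  proof (cases "x \<in> L (Suc n)")
    case True
    then obtain y where "y \<in> L n" "x \<noteq> y" "\<not> E x y" using Suc by blast
    thus ?thesis using L_mono1 by blast
  next
    case False
    thus ?thesis using Suc.prems by auto
  qed
qed

lemma H_V: "H \<subseteq> V" unfolding H_def using L_V by blast
lemma A_H: "A \<subseteq> H" unfolding H_def using A_L[of 0] by blast
lemma H_ok: "x \<in> H \<Longrightarrow> x \<in> A \<or> hn x" unfolding H_def using L_ok by blast

lemma homog:
  assumes v: "v \<in> V" "v \<notin> H"
  shows "(\<forall>h\<in>H. E v h) \<or> (\<forall>h\<in>H. \<not> E v h)"
proof (cases "v \<in> A \<or> hn v")
  case True
  have "E v h" if h: "h \<in> H" for h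
  proof (rule ccontr)
    assume ne: "\<not> E v h"
    obtain m where "h \<in> L m" using h unfolding H_def by blast
    moreover have "v \<noteq> h" using v h by blast
    ultimately have "v \<in> L (Suc m)" using L_add[OF v(1) True] ne by blast
    thus False using v unfolding H_def by blast
  qed
  thus ?thesis by blast
next
  case False
  hence vA: "v \<notin> A" and vz: "\<And>i. \<not> E v (a i)" unfolding hn_def by auto
  have "\<forall>h\<in>L m. \<not> E v h" for m
  proof (induction m)
    case 0
    show ?case using vz a_surj by fastforce
  next
    case (Suc m)
    show ?case
    proof
      fix h assume h: "h \<in> L (Suc m)"
      show "\<not> E v h"
      proof (cases "h \<in> L m")
        case True thus ?thesis using Suc by blast
      next
        case hn: False
        then obtain y where y: "y \<in> L m" "h \<noteq> y" "\<not> E h y" and hV: "h \<in> V"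
          and hok: "h \<in> A \<or> hn h" using h by (auto simp: hn_iff)
        show ?thesis
        proof
          assume vh: "E v h"
          have hA: "h \<notin> A" using vh vz a_surj by blast
          hence hh: "hn h" using hok by blast
          show False
          proof (cases "\<exists>q. \<not> E h (a q)")
            case True
            then obtain q where "\<not> E h (a q)" by blast
            thus False using Zlem[OF v(1) vA vz hV hA hh _ vh] by blast
          next
            case False
            hence hall: "\<And>i. E h (a i)" by blast
            have yA: "y \<notin> A" using y(3) hall a_surj by blast
            have yV: "y \<in> V" using y L_V by blast
            have yh: "hn y" using L_ok[OF y(1)] yA by blast
            obtain p where p: "E y (a p)" "E y (a (p+1))" using E1[OF yV yA yh] by blast
            have vy: "\<not> E v y" using Suc y by blast
            have vy': "v \<noteq> y" using v y(1) unfolding H_def by blast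
            have vh': "v \<noteq> h" using vh by auto
            show False
              by (rule banner_False[OF nob, of h "a p" y "a (p+1)" v])
                (use hV yV v vA hA yA y vh vy vy' vh' hall p vz in \<open>simp_all add: aa_simps\<close>)
          qed
        qed
      qed
    qed
  qed
  thus ?thesis unfolding H_def by blast
qed

end

context AH begin

definition ct where "ct x y z \<longleftrightarrow> x\<in>H \<and> y\<in>H \<and> z\<in>H \<and> x\<noteq>y \<and> y\<noteq>z \<and> x\<noteq>z \<and> \<not> E x y \<and> \<not> E y z \<and> \<not> E x z"

lemma ct_swap12: "ct x y z \<Longrightarrow> ct y x z" unfolding ct_def using sym by blast
lemma ct_swap23: "ct x y z \<Longrightarrow> ct x z y" unfolding ct_def using sym by blast

lemma H_out: "u \<in> H \<Longrightarrow> u \<notin> A \<Longrightarrow> u \<in> V \<and> hn u" using H_ok H_V by blast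

lemma A_nb: "\<not> E (a i) u \<Longrightarrow> u \<in> A \<Longrightarrow> u \<noteq> a i \<Longrightarrow> u = a (i+1) \<or> u = a (i - 1)"
proof -
  assume h: "\<not> E (a i) u" "u \<in> A" "u \<noteq> a i"
  obtain j where j: "u = a j" using a_surj h(2) by blast
  have "a j = a (i+1) \<or> a i = a (j+1)" using a_nonadj[of i j] h j by metis
  moreover have "a i = a (j+1) \<Longrightarrow> a j = a (i - 1)"
  proof -
    assume "a i = a (j+1)"
    hence "int k dvd (i - (j+1))" using a_eq_iff by blast
    hence "int k dvd - (i - (j+1))" by (simp only: dvd_minus_iff)
    moreover have "- (i - (j+1)) = j - (i - 1)" by simp
    ultimately show ?thesis using a_eq_iff by metis
  qed
  ultimately show ?thesis using j by blast
qed

lemma ct_AA: "ct x y z \<Longrightarrow> x \<in> A \<Longrightarrow> y \<in> A \<Longrightarrow> False"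
proof -
  assume c: "ct x y z" "x \<in> A" "y \<in> A"
  obtain i where x: "x = a i" using a_surj c(2) by blast
  have y: "y = a (i+1) \<or> y = a (i - 1)" using A_nb[of i y] c x unfolding ct_def by blast
  show False
  proof (cases "z \<in> A")
    case True
    have z: "z = a (i+1) \<or> z = a (i - 1)" using A_nb[of i z] c x True unfolding ct_def by blast
    have "E (a (i+1)) (a (i - 1))" "E (a (i - 1)) (a (i+1))" by (simp_all add: aa_simps)
    thus False using y z c unfolding ct_def by auto
  next
    case False
    have zz: "z \<in> V" "hn z" using H_out[of z] c False unfolding ct_def by auto
    have zx: "\<not> E z (a i)" using c x sym unfolding ct_def by blast
    have zy: "\<not> E z y" using c sym unfolding ct_def by blast
    from y show False
    proof
      assume "y = a (i+1)" thus False using F1[OF zz(1) False zz(2) zx] zy by simp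
    next
      assume "y = a (i - 1)" thus False using F1'[OF zz(1) False zz(2) zx] zy by simp
    qed
  qed
qed

lemma ct_A: "ct x y z \<Longrightarrow> x \<in> A \<Longrightarrow> False"
proof -
  assume c: "ct x y z" and xA: "x \<in> A"
  show False
  proof (cases "y \<in> A")
    case True thus False using ct_AA c xA by blast
  next
    case yA: False
    show False
    proof (cases "z \<in> A")
      case True thus False using ct_AA[OF ct_swap23[OF c]] xA by blast
    next
      case zA: False
      obtain i where x: "x = a i" using a_surj xA by blast
      have yy: "y \<in> V" "hn y" using H_out[of y] c yA unfolding ct_def by auto
      have zz: "z \<in> V" "hn z" using H_out[of z] c zA unfolding ct_def by auto
      have "\<not> E y (a i)" "\<not> E z (a i)" "y \<noteq> z" "\<not> E y z" using c x sym unfolding ct_def by blast+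
      thus False using alpha[OF yy(1) yA yy(2) zz(1) zA zz(2)] by blast
    qed
  qed
qed

lemma ct_low: "ct x y z \<Longrightarrow> x \<in> L 1 \<Longrightarrow> False"
proof -
  assume c: "ct x y z" and x1: "x \<in> L 1"
  show False
  proof (cases "x \<in> A \<or> y \<in> A \<or> z \<in> A")
    case True
    thus False using ct_A[OF c] ct_A[OF ct_swap12[OF c]] ct_A[OF ct_swap12[OF ct_swap23[OF ct_swap12[OF c]]]] by blast
  next
    case False
    hence nA: "x \<notin> A" "y \<notin> A" "z \<notin> A" by auto
    have xx: "x \<in> V" "hn x" using H_out[of x] c nA unfolding ct_def by auto
    have yy: "y \<in> V" "hn y" using H_out[of y] c nA unfolding ct_def by auto
    have zz: "z \<in> V" "hn z" using H_out[of z] c nA unfolding ct_def by auto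
    obtain w where w: "w \<in> A" "\<not> E x w" using L_back[of x 0] x1 nA by auto
    obtain j where "w = a j" using a_surj w by blast
    hence "\<not> E x (a j)" using w by simp
    thus False using beta[OF xx(1) nA(1) xx(2) yy(1) nA(2) yy(2) zz(1) nA(3) zz(2)] c unfolding ct_def by blast
  qed
qed

lemma ct_high:
  assumes c: "ct x y z" and x2: "x \<in> L (Suc (Suc m))"
    and mini: "\<And>x' y' z'. ct x' y' z' \<Longrightarrow> x' \<notin> L (Suc m)"
  shows False
proof -
  have nin: "x \<notin> L (Suc m)" "y \<notin> L (Suc m)" "z \<notin> L (Suc m)"
    using mini[OF c] mini[OF ct_swap12[OF c]] mini[OF ct_swap12[OF ct_swap23[OF ct_swap12[OF c]]]] by auto
  have xA: "x \<notin> A" using nin A_L by blast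
  obtain p1 where p1: "p1 \<in> L (Suc m)" "x \<noteq> p1" "\<not> E x p1" using L_back[OF x2 xA] by blast
  have p1H: "p1 \<in> H" using p1 unfolding H_def by blast
  have p1V: "p1 \<in> V" using p1 L_V by blast
  have yp1: "E p1 y"
  proof (rule ccontr)
    assume "\<not> E p1 y"
    hence "ct p1 x y" using c p1 p1H nin sym unfolding ct_def by blast
    thus False using mini p1 by blast
  qed
  have zp1: "E p1 z"
  proof (rule ccontr)
    assume "\<not> E p1 z"
    hence "ct p1 x z" using c p1 p1H nin sym unfolding ct_def by blast
    thus False using mini p1 by blast
  qed
  obtain p2 where p2: "p2 \<in> L m" "p1 \<noteq> p2" "\<not> E p1 p2"
  proof (cases "p1 \<in> A")
    case True
    then obtain i where i: "p1 = a i" using a_surj by blast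
    have "a (i+1) \<in> L m" using A_L[of m] a_in by blast
    moreover have "p1 \<noteq> a (i+1)" "\<not> E p1 (a (i+1))" using i by (simp_all add: aa_simps)
    ultimately show ?thesis using that by blast
  next
    case False
    thus ?thesis using L_back[OF p1(1) False] that by blast
  qed
  have p2n: "p2 \<in> L (Suc m)" using p2 L_mono1 by blast
  have p2V: "p2 \<in> V" using p2 L_V by blast
  have adj2: "E s p2" if s: "s \<in> H" "s \<notin> L (Suc m)" for s
  proof (rule ccontr)
    assume "\<not> E s p2"
    moreover have "s \<in> V" "s \<in> A \<or> hn s" using s H_V H_ok by auto
    moreover have "s \<noteq> p2" using s p2n by blast
    ultimately have "s \<in> L (Suc m)" using L_add p2(1) by blast
    thus False using s by blast
  qed
  have xyz: "x \<in> H" "y \<in> H" "z \<in> H" using c unfolding ct_def by auto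
  have e: "E x p2" "E y p2" "E z p2" using adj2 xyz nin by auto
  have xyzV: "x \<in> V" "y \<in> V" "z \<in> V" using xyz H_V by auto
  have d: "p2 \<noteq> x" "p2 \<noteq> y" "p2 \<noteq> z" "p1 \<noteq> y" "p1 \<noteq> z" using nin p2n p1 by auto
  have cf: "x \<noteq> y" "y \<noteq> z" "x \<noteq> z" "\<not> E x y" "\<not> E y z" "\<not> E x z"
    using c unfolding ct_def by auto
  have e': "E p2 y" "E z p2" "E y p1" using e yp1 sym by blast+
  have e'': "\<not> E p2 p1" using p2(3) sym by blast
  show False
    by (rule banner_False[OF nob, of p2 y p1 z x])
      (use cf p1 p2 d e e' e'' yp1 zp1 xyzV p1V p2V in \<open>simp_all\<close>)
qed

lemma no_ct: "\<not> has_cotriangle E H"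
proof
  assume "has_cotriangle E H"
  then obtain x y z where c: "ct x y z" unfolding has_cotriangle_def ct_def by auto
  define Q where "Q m \<longleftrightarrow> (\<exists>x y z. ct x y z \<and> x \<in> L m)" for m
  obtain m0 where "x \<in> L m0" using c unfolding ct_def H_def by blast
  hence "Q m0" using c unfolding Q_def by blast
  define m where "m = (LEAST m. Q m)"
  have Qm: "Q m" unfolding m_def by (rule LeastI) fact
  have minQ: "\<And>m'. m' < m \<Longrightarrow> \<not> Q m'" unfolding m_def using not_less_Least by blast
  obtain x' y' z' where c': "ct x' y' z'" "x' \<in> L m" using Qm unfolding Q_def by blast
  show False
  proof (cases "m \<le> 1")
    case True
    thus False using ct_low[OF c'(1)] c'(2) L_mono[OF True] by blast
  next
    case False
    define m' where "m' = m - 2"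
    have mm: "m = Suc (Suc m')" using False unfolding m'_def by arith
    have "\<not> Q (Suc m')" using minQ mm by simp
    hence "\<And>a b c. ct a b c \<Longrightarrow> a \<notin> L (Suc m')" unfolding Q_def by blast
    thus False using ct_high[OF c'(1)] c'(2) mm by blast
  qed
qed

end

context AH begin
lemma main_loc: "\<exists>H. A \<subseteq> H \<and> H \<subseteq> V \<and> (\<forall>v\<in>V-H. (\<forall>h\<in>H. E v h) \<or> (\<forall>h\<in>H. \<not> E v h)) \<and> \<not> has_cotriangle E H"
proof (intro exI[of _ H] conjI ballI)
  fix v assume "v \<in> V - H"
  thus "(\<forall>h\<in>H. E v h) \<or> (\<forall>h\<in>H. \<not> E v h)" using homog by blast
qed (use A_H H_V no_ct in auto)
end

lemma stab_cot:
  assumes sg: "simple_graph V E" and st: "\<not> stability_number V E \<le> 2"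
  shows "has_cotriangle E V"
proof -
  have fin: "finite V" using sg unfolding simple_graph_def by blast
  define Ss where "Ss = {card S |S. S \<subseteq> V \<and> is_stable E S}"
  have sub: "Ss \<subseteq> card ` Pow V" unfolding Ss_def by auto
  have "finite (card ` Pow V)" using fin by simp
  hence finS: "finite Ss" using sub finite_subset by blast
  have "{} \<subseteq> V \<and> is_stable E {}" unfolding is_stable_def by simp
  hence "card {} \<in> Ss" unfolding Ss_def by (intro CollectI exI[of _ "{}"]) simp
  hence "Ss \<noteq> {}" by blast
  hence "Max Ss \<in> Ss" using finS Max_in by blast
  moreover have mem: "\<exists>S. S \<subseteq> V \<and> is_stable E S \<and> card S = m" if "m \<in> Ss" for m
    using that unfolding Ss_def by blast
  ultimately obtain S where S: "S \<subseteq> V" "is_stable E S" "card S = Max Ss" by blast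
  have "stability_number V E = Max Ss" unfolding stability_number_def Ss_def ..
  hence c3: "3 \<le> card S" using S(3) st by simp
  from obtain_subset_with_card_n[OF c3] obtain T where T: "T \<subseteq> S" "card T = 3" by blast
  from T(2) obtain x y z where xyz: "T = {x,y,z}" "x \<noteq> y" "y \<noteq> z" "x \<noteq> z"
    unfolding card_3_iff by blast
  have inS: "x \<in> S" "y \<in> S" "z \<in> S" using xyz(1) T(1) by auto
  have inV: "x \<in> V" "y \<in> V" "z \<in> V" using inS S(1) by auto
  have nE: "\<not> E x y" "\<not> E y z" "\<not> E x z" using inS S(2) unfolding is_stable_def by blast+
  show ?thesis unfolding has_cotriangle_def
    by (rule bexI[of _ x], rule bexI[of _ y], rule bexI[of _ z]) (use xyz nE inV in simp_all)
qed

lemma no_c5_antihole: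
  assumes sg: "simple_graph V E" and nh: "\<not> (\<exists>S. is_odd_hole V E S)"
    and AV: "A \<subseteq> V" and bij: "bij_betw f {..<5} A"
    and c: "\<forall>i<5. \<forall>j<5. i \<noteq> j \<longrightarrow> (\<not> E (f i) (f j) \<longleftrightarrow> (j = Suc i mod 5 \<or> i = Suc j mod 5))"
  shows False
proof -
  have inj: "inj_on f {..<5}" using bij bij_betw_def by blast
  have fV: "f i \<in> V" if "i < 5" for i using bij_betw_apply[OF bij] that AV by auto
  have ne: "f i \<noteq> f j" if "i < 5" "j < 5" "i \<noteq> j" for i j
    using inj that unfolding inj_on_def by blast
  have d: "distinct [f 0, f 2, f 4, f 1, f 3]"
    using ne[of 0 2] ne[of 0 4] ne[of 0 1] ne[of 0 3] ne[of 2 4] ne[of 2 1] ne[of 2 3]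
      ne[of 4 1] ne[of 4 3] ne[of 1 3] by auto
  have ci: "\<not> E (f i) (f j) \<longleftrightarrow> (j = Suc i mod 5 \<or> i = Suc j mod 5)" if "i < 5" "j < 5" "i \<noteq> j" for i j
    using c that by blast
  have e: "E (f 0) (f 2)" "E (f 2) (f 4)" "E (f 4) (f 1)" "E (f 1) (f 3)" "E (f 3) (f 0)"
    using ci[of 0 2] ci[of 2 4] ci[of 4 1] ci[of 1 3] ci[of 3 0] by simp_all
  have n: "\<not> E (f 0) (f 4)" "\<not> E (f 0) (f 1)" "\<not> E (f 2) (f 1)" "\<not> E (f 2) (f 3)" "\<not> E (f 4) (f 3)"
    using ci[of 0 4] ci[of 0 1] ci[of 2 1] ci[of 2 3] ci[of 4 3] by simp_all
  show False
    by (rule c5_False[OF sg nh, of "f 0" "f 2" "f 4" "f 1" "f 3"])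
      (use fV d e n in simp_all)
qed

theorem theorem2:
  fixes V :: "'a set" and E :: "'a \<Rightarrow> 'a \<Rightarrow> bool"
  assumes "simple_graph V E"
    and "\<not> has_induced_banner V E"
    and "\<not> (\<exists>S. is_odd_hole V E S)"
  shows "perfect V E \<or> stability_number V E \<le> 2 \<or>
    (\<forall>A. is_odd_antihole V E A \<longrightarrow>
       (\<exists>H. A \<subseteq> H \<and> homogeneous V E H \<and> \<not> has_cotriangle E H))"
proof (cases "stability_number V E \<le> 2")
  case True thus ?thesis by blast
next
  case False
  have fin: "finite V" using assms(1) unfolding simple_graph_def by blast
  have cotV: "has_cotriangle E V" using stab_cot[OF assms(1) False] .
  have "\<forall>A. is_odd_antihole V E A \<longrightarrow> (\<exists>H. A \<subseteq> H \<and> homogeneous V E H \<and> \<not> has_cotriangle E H)"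
  proof (intro allI impI)
    fix A assume oa: "is_odd_antihole V E A"
    then obtain f k where AV: "A \<subseteq> V" and k4: "4 \<le> k" and bij: "bij_betw f {..<k} A"
      and cond: "\<forall>i<k. \<forall>j<k. i \<noteq> j \<longrightarrow> (\<not> E (f i) (f j) \<longleftrightarrow> (j = Suc i mod k \<or> i = Suc j mod k))"
      and odd: "odd (card A)"
      unfolding is_odd_antihole_def is_antihole_def by blast
    have cardA: "card A = k" using bij_betw_same_card[OF bij] by simp
    have k5: "k \<noteq> 5"
    proof
      assume "k = 5"
      thus False using no_c5_antihole[OF assms(1) assms(3) AV, of f] bij cond by simp
    qed
    have k7: "7 \<le> k" using k4 k5 odd cardA by presburger
    interpret AH V E A k f
      by unfold_locales (use assms AV k7 odd cardA bij cond in auto)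
    obtain H' where H': "A \<subseteq> H'" "H' \<subseteq> V" "\<forall>v\<in>V-H'. (\<forall>h\<in>H'. E v h) \<or> (\<forall>h\<in>H'. \<not> E v h)"
      "\<not> has_cotriangle E H'" using main_loc by blast
    have finH: "finite H'" using H'(2) fin finite_subset by blast
    have "card A \<le> card H'" using card_mono[OF finH H'(1)] .
    hence c2: "2 \<le> card H'" using cardA k7 by simp
    have "H' \<noteq> V" using H'(4) cotV by blast
    hence "H' \<subset> V" using H'(2) by blast
    hence c3: "card H' < card V" using psubset_card_mono[OF fin] by blast
    have "homogeneous V E H'" unfolding homogeneous_def using H'(2,3) c2 c3 by blast
    thus "\<exists>H. A \<subseteq> H \<and> homogeneous V E H \<and> \<not> has_cotriangle E H" using H' by blast
  qed
  thus ?thesis by blast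
qed

end
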